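(* Let $\Delta:M_n\to M_n$ be a weak-2-local derivation which is symmetric, i.e. $\Delta(a^* )^*=\Delta(a)$ for all $a\in M_n$. Let $p_1,\ldots,p_n$ be mutually orthogonal minimal projections in $M_n$ and $q=1-p_n$. If $\Delta(p_j)=0$ for every $j=1,\ldots,n$, then $q\Delta(qaq)p_n=0=p_n\Delta(qaq)q$ for every $a\in M_n$.
   Context: $M_n=M_n(\mathbb{C})$. A derivation on $M_n$ is a linear map $D$ with $D(ab)=D(a)b+aD(b)$. A (not necessarily linear) map $\Delta:M_n\to M_n$ is a weak-2-local derivation if for every $a,b\in M_n$ and every $\phi\in M_n^*$ there exists a derivation $D_{a,b,\phi}$ such that $\phi\Delta(a)=\phi D_{a,b,\phi}(a)$ and $\phi\Delta(b)=\phi D_{a,b,\phi}(b)$. *)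

theory Defs
  imports "HOL-Analysis.Analysis"
begin

type_synonym 'n cmat = "complex ^ 'n ^ 'n"

definition cscale :: "complex \<Rightarrow> 'n::finite cmat \<Rightarrow> 'n cmat" where
  "cscale c A = (\<chi> i j. c * A $ i $ j)"

definition cadj :: "'n::finite cmat \<Rightarrow> 'n cmat" where
  "cadj A = (\<chi> i j. cnj (A $ j $ i))"

definition clinear_mat_map :: "('n::finite cmat \<Rightarrow> 'n cmat) \<Rightarrow> bool" where
  "clinear_mat_map f \<longleftrightarrow> (\<forall>x y. f (x + y) = f x + f y) \<and> (\<forall>c x. f (cscale c x) = cscale c (f x))"

definition clinear_functional :: "('n::finite cmat \<Rightarrow> complex) \<Rightarrow> bool" where
  "clinear_functional \<phi> \<longleftrightarrow> (\<forall>x y. \<phi> (x + y) = \<phi> x + \<phi> y) \<and> (\<forall>c x. \<phi> (cscale c x) = c * \<phi> x)"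

definition is_derivation :: "('n::finite cmat \<Rightarrow> 'n cmat) \<Rightarrow> bool" where
  "is_derivation D \<longleftrightarrow> clinear_mat_map D \<and> (\<forall>a b. D (a ** b) = D a ** b + a ** D b)"

definition weak_2_local_derivation :: "('n::finite cmat \<Rightarrow> 'n cmat) \<Rightarrow> bool" where
  "weak_2_local_derivation \<Delta> \<longleftrightarrow>
     (\<forall>a b \<phi>. clinear_functional \<phi> \<longrightarrow>
        (\<exists>D. is_derivation D \<and> \<phi> (\<Delta> a) = \<phi> (D a) \<and> \<phi> (\<Delta> b) = \<phi> (D b)))"

definition is_projection :: "'n::finite cmat \<Rightarrow> bool" where
  "is_projection p \<longleftrightarrow> cadj p = p \<and> p ** p = p"

text \<open>Minimal projection: nonzero, and no projection strictly between 0 and p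
  (e \<le> p for projections means e = e p).\<close>
definition minimal_projection :: "'n::finite cmat \<Rightarrow> bool" where
  "minimal_projection p \<longleftrightarrow> is_projection p \<and> p \<noteq> 0 \<and>
     (\<forall>e. is_projection e \<and> e ** p = e \<longrightarrow> e = 0 \<or> e = p)"

end

theory Submission
  imports Defs
begin


definition E :: "'n::finite \<Rightarrow> 'n \<Rightarrow> 'n cmat" where
  "E i j = (\<chi> r s. if r = i \<and> s = j then 1 else 0)"

lemma mm_entry: "(A ** B) $ i $ j = (\<Sum>k\<in>UNIV. A$i$k * B$k$j)"
  by (simp add: matrix_matrix_mult_def)

lemma cscale_entry[simp]: "cscale c A $ i $ j = c * A $ i $ j"
  by (simp add: cscale_def)

lemma cadj_entry[simp]: "cadj A $ i $ j = cnj (A $ j $ i)"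
  by (simp add: cadj_def)

lemma E_entry[simp]: "E i j $ r $ s = (if r = i then (if s = j then 1 else 0) else 0)"
  by (simp add: E_def)

lemma mult_if0: "a * (if P then b else 0) = (if P then a * b else (0::complex))" by simp
lemma if0_mult: "(if P then b else 0) * a = (if P then b * a else (0::complex))" by simp

lemma E_right: "(A ** E k l) $ i $ j = (if j = l then A$i$k else 0)"
  by (simp add: mm_entry mult_if0 sum.delta')
lemma E_left: "(E k l ** A) $ i $ j = (if i = k then A$l$j else 0)"
  by (cases "i = k") (simp_all add: mm_entry if0_mult sum.delta)

lemma mm_if0: "A ** (if P then B else 0) = (if P then A ** B else (0::'n::finite cmat))" by simp

lemma E_mult: "E i j ** E k l = (if j = k then E i l else 0)"
  by (simp add: vec_eq_iff E_right)

lemma E_sum: "(\<Sum>k\<in>UNIV. E k k) = (mat 1 :: 'n::finite cmat)"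
  by (auto simp: vec_eq_iff mat_def)

lemma madd_rdistrib: "(A + B) ** C = A ** C + B ** (C::'n::finite cmat)"
  by (simp add: vec_eq_iff mm_entry distrib_right sum.distrib)
lemma mdiff_rdistrib: "(A - B) ** C = A ** C - B ** (C::'n::finite cmat)"
  by (simp add: vec_eq_iff mm_entry left_diff_distrib sum_subtractf)
lemma mdiff_ldistrib: "C ** (A - B) = C ** A - C ** (B::'n::finite cmat)"
  by (simp add: vec_eq_iff mm_entry right_diff_distrib sum_subtractf)
lemma cscale_mm_left: "cscale c A ** B = cscale c (A ** (B::'n::finite cmat))"
  by (simp add: vec_eq_iff mm_entry sum_distrib_left mult.assoc)
lemma cscale_mm_right: "A ** cscale c B = cscale c (A ** (B::'n::finite cmat))"
  by (simp add: vec_eq_iff mm_entry sum_distrib_left mult.left_commute)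

lemma mm_sum_left: "(\<Sum>k\<in>S. (f k :: 'n::finite cmat)) ** (B::'n cmat) = (\<Sum>k\<in>S. f k ** B)"
  by (induct S rule: infinite_finite_induct) (auto simp: madd_rdistrib)
lemma mm_sum_right: "(B::'n::finite cmat) ** (\<Sum>k\<in>S. (f k :: 'n::finite cmat)) = (\<Sum>k\<in>S. B ** f k)"
  by (induct S rule: infinite_finite_induct) (auto simp: matrix_add_ldistrib)

lemma deriv_add: "is_derivation D \<Longrightarrow> D (a + b) = D a + D b"
  by (simp add: is_derivation_def clinear_mat_map_def)
lemma deriv_scale: "is_derivation D \<Longrightarrow> D (cscale c a) = cscale c (D a)"
  by (simp add: is_derivation_def clinear_mat_map_def)
lemma deriv_mult: "is_derivation D \<Longrightarrow> D (a ** b) = D a ** b + a ** D b"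
  by (simp add: is_derivation_def)
lemma deriv_zero: "is_derivation D \<Longrightarrow> D 0 = 0"
  using deriv_add[of D 0 0] by simp
lemma deriv_sum: "is_derivation D \<Longrightarrow> D (\<Sum>k\<in>S. f k) = (\<Sum>k\<in>S. D (f k))"
  by (induct S rule: infinite_finite_induct) (auto simp: deriv_zero deriv_add)

lemma lin_ext:
  fixes f g :: "'n::finite cmat \<Rightarrow> 'n cmat"
  assumes "clinear_mat_map f" "clinear_mat_map g" "\<And>i j. f (E i j) = g (E i j)"
  shows "f a = g a"
proof -
  have dec: "a = (\<Sum>i\<in>UNIV. \<Sum>j\<in>UNIV. cscale (a$i$j) (E i j))"
  proof (simp only: vec_eq_iff, intro allI)
    fix r s
    have "(\<Sum>i\<in>UNIV. \<Sum>j\<in>UNIV. cscale (a$i$j) (E i j)) $ r $ s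
        = (\<Sum>i\<in>UNIV. \<Sum>j\<in>UNIV. a$i$j * (if r = i then (if s = j then 1 else 0) else 0))" by simp
    also have "\<dots> = (\<Sum>i\<in>UNIV. if r = i then a$i$s else 0)"
      by (rule sum.cong) (auto simp: mult_if0 sum.delta)
    also have "\<dots> = a$r$s" by simp
    finally show "a$r$s = (\<Sum>i\<in>UNIV. \<Sum>j\<in>UNIV. cscale (a$i$j) (E i j)) $ r $ s" by simp
  qed
  have lf: "\<And>h :: 'n cmat \<Rightarrow> 'n cmat. clinear_mat_map h \<Longrightarrow> h (\<Sum>i\<in>UNIV. \<Sum>j\<in>UNIV. cscale (a$i$j) (E i j)) = (\<Sum>i\<in>UNIV. \<Sum>j\<in>UNIV. cscale (a$i$j) (h (E i j)))"
  proof -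
    fix h :: "'n cmat \<Rightarrow> 'n cmat" assume h: "clinear_mat_map h"
    have z: "h 0 = 0" using h unfolding clinear_mat_map_def by (metis add_cancel_right_right add_0)
    have s: "\<And>S F. h (\<Sum>k\<in>S. F k) = (\<Sum>k\<in>S. h (F k))"
      subgoal for S F
        by (induct S rule: infinite_finite_induct) (use h z in \<open>auto simp: clinear_mat_map_def\<close>)
      done
    show "?thesis h" using h by (simp add: s clinear_mat_map_def)
  qed
  have f1: "f a = (\<Sum>i\<in>UNIV. \<Sum>j\<in>UNIV. cscale (a$i$j) (f (E i j)))"
    using arg_cong[where f=f, OF dec] lf[OF assms(1)] by (rule trans)
  have g1: "g a = (\<Sum>i\<in>UNIV. \<Sum>j\<in>UNIV. cscale (a$i$j) (g (E i j)))"
    using arg_cong[where f=g, OF dec] lf[OF assms(2)] by (rule trans)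
  show ?thesis unfolding f1 g1 assms(3) ..
qed

lemma deriv_inner:
  fixes D :: "'n::finite cmat \<Rightarrow> 'n cmat"
  assumes D: "is_derivation D"
  shows "\<exists>d. \<forall>a. D a = d ** a - a ** d"
proof -
  obtain i0 :: 'n where True by blast
  define d where "d = (\<Sum>k\<in>UNIV. D (E k i0) ** E i0 k)"
  have e1: "d ** E i j = D (E i i0) ** E i0 j" for i j
    by (simp add: d_def mm_sum_left matrix_mul_assoc[symmetric] E_mult mm_if0 sum.delta')
  have e2: "E i j ** D (E k i0) = (if j = k then D (E i i0) else 0) - D (E i j) ** E k i0" for i j k
  proof -
    have "D (E i j ** E k i0) = D (E i j) ** E k i0 + E i j ** D (E k i0)" by (rule deriv_mult[OF D])
    then have "E i j ** D (E k i0) = D (E i j ** E k i0) - D (E i j) ** E k i0" by simp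
    then show ?thesis by (cases "j = k") (simp_all add: E_mult deriv_zero[OF D])
  qed
  have e3: "E i j ** d = D (E i i0) ** E i0 j - D (E i j)" for i j
  proof -
    have "E i j ** d = (\<Sum>k\<in>UNIV. E i j ** D (E k i0) ** E i0 k)"
      by (simp add: d_def mm_sum_right matrix_mul_assoc)
    also have "\<dots> = (\<Sum>k\<in>UNIV. (if j = k then D (E i i0) ** E i0 k else 0) - D (E i j) ** (E k i0 ** E i0 k))"
      by (rule sum.cong) (auto simp: e2 mdiff_rdistrib matrix_mul_assoc)
    also have "\<dots> = D (E i i0) ** E i0 j - D (E i j) ** (\<Sum>k\<in>UNIV. E k i0 ** E i0 k)"
      by (simp add: sum_subtractf mm_sum_right)
    also have "(\<Sum>k\<in>UNIV. E k i0 ** E i0 k) = mat 1"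
      by (simp add: E_mult E_sum)
    finally show ?thesis by simp
  qed
  have lin: "clinear_mat_map (\<lambda>a. d ** a - a ** d)"
    by (simp add: clinear_mat_map_def matrix_add_ldistrib madd_rdistrib cscale_mm_left cscale_mm_right)
       (simp add: vec_eq_iff algebra_simps)
  have "D a = d ** a - a ** d" for a
    by (rule lin_ext[OF _ lin]) (use D e1 e3 in \<open>auto simp: is_derivation_def\<close>)
  then show ?thesis by blast
qed



definition diagm :: "('n::finite \<Rightarrow> complex) \<Rightarrow> 'n cmat" where
  "diagm \<mu> = (\<chi> r s. if r = s then \<mu> r else 0)"

lemma diagm_entry[simp]: "diagm \<mu> $ r $ s = (if r = s then \<mu> r else 0)"
  by (simp add: diagm_def)

lemma diag_right: "(A ** diagm \<mu>) $ i $ j = A$i$j * \<mu> j"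
  by (simp add: mm_entry mult_if0 sum.delta')
lemma diag_left: "(diagm \<mu> ** A) $ i $ j = \<mu> i * A$i$j"
  by (simp add: mm_entry if0_mult sum.delta)
lemma w2l:
  fixes \<Delta> :: "'n::finite cmat \<Rightarrow> 'n cmat"
  assumes "weak_2_local_derivation \<Delta>" "clinear_functional \<phi>"
  shows "\<exists>d. \<phi> (\<Delta> a) = \<phi> (d ** a - a ** d) \<and> \<phi> (\<Delta> b) = \<phi> (d ** b - b ** d)"
proof -
  obtain D where D: "is_derivation D" "\<phi> (\<Delta> a) = \<phi> (D a)" "\<phi> (\<Delta> b) = \<phi> (D b)"
    using assms unfolding weak_2_local_derivation_def by blast
  obtain d where "\<forall>a. D a = d ** a - a ** d" using deriv_inner[OF D(1)] by blast
  then show ?thesis using D by metis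
qed

lemma entry_functional: "clinear_functional (\<lambda>y::'n::finite cmat. y $ k $ l)"
  by (simp add: clinear_functional_def)

lemma diag_zero:
  fixes \<Delta> :: "'n::finite cmat \<Rightarrow> 'n cmat"
  assumes w: "weak_2_local_derivation \<Delta>" and z: "\<forall>j. \<Delta> (E j j) = 0"
  shows "\<Delta> (diagm \<mu>) = 0"
proof -
  have "\<Delta> (diagm \<mu>) $ k $ l = 0" for k l
  proof -
    obtain d where d: "\<Delta> (diagm \<mu>) $ k $ l = (d ** diagm \<mu> - diagm \<mu> ** d) $ k $ l"
      "\<Delta> (E k k) $ k $ l = (d ** E k k - E k k ** d) $ k $ l"
      using w2l[OF w entry_functional[of k l], of "diagm \<mu>" "E k k"] by blast
    have d1: "\<Delta> (diagm \<mu>) $ k $ l = d$k$l * \<mu> l - \<mu> k * d$k$l"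
      using d(1) by (simp add: diag_right diag_left)
    show ?thesis
    proof (cases "k = l")
      case True then show ?thesis using d1 by simp
    next
      case False
      then have "d$k$l = 0" using d(2) z by (simp add: E_right E_left)
      then show ?thesis using d1 by simp
    qed
  qed
  then show ?thesis by (simp add: vec_eq_iff)
qed





lemma gen_functional: "clinear_functional (\<lambda>y::'n::finite cmat. \<Sum>j\<in>UNIV. cnj (\<alpha> j) * y $ j $ m)"
  by (simp add: clinear_functional_def sum.distrib sum_distrib_left distrib_left mult.left_commute)

lemma std_gen:
  fixes \<Delta> :: "'n::finite cmat \<Rightarrow> 'n cmat"
  assumes w: "weak_2_local_derivation \<Delta>" and z: "\<forall>j. \<Delta> (E j j) = 0"
    and x: "\<forall>i. x $ i $ m = 0" and \<alpha>: "\<forall>j. \<alpha> j \<noteq> 0"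
  shows "(\<Sum>j\<in>UNIV. cnj (\<alpha> j) * \<Delta> x $ j $ m) = 0"
proof -
  define \<phi> where "\<phi> = (\<lambda>y::'n cmat. \<Sum>j\<in>UNIV. cnj (\<alpha> j) * y $ j $ m)"
  define \<mu> where "\<mu> = (\<lambda>j. (\<Sum>i\<in>UNIV. cnj (\<alpha> i) * x$i$j) / cnj (\<alpha> j))"
  have \<mu>m: "\<mu> m = 0" using x by (simp add: \<mu>_def)
  have \<mu>e: "cnj (\<alpha> j) * \<mu> j = (\<Sum>i\<in>UNIV. cnj (\<alpha> i) * x$i$j)" for j
    using \<alpha> by (simp add: \<mu>_def)
  obtain d where d: "\<phi> (\<Delta> x) = \<phi> (d ** x - x ** d)" "\<phi> (\<Delta> (diagm \<mu>)) = \<phi> (d ** diagm \<mu> - diagm \<mu> ** d)"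
    using w2l[OF w gen_functional[of \<alpha> m], of x "diagm \<mu>"] unfolding \<phi>_def by blast
  have "\<phi> (d ** x - x ** d) = - (\<Sum>j\<in>UNIV. \<Sum>i\<in>UNIV. cnj (\<alpha> j) * (x$j$i * d$i$m))"
    using x by (simp add: \<phi>_def mm_entry right_diff_distrib sum_distrib_left sum_subtractf sum_negf)
  also have "\<dots> = - (\<Sum>i\<in>UNIV. (\<Sum>j\<in>UNIV. cnj (\<alpha> j) * x$j$i) * d$i$m)"
    by (subst sum.swap) (simp add: sum_distrib_right mult.assoc)
  also have "\<dots> = - (\<Sum>i\<in>UNIV. cnj (\<alpha> i) * \<mu> i * d$i$m)"
    by (simp add: \<mu>e)
  also have "\<dots> = \<phi> (d ** diagm \<mu> - diagm \<mu> ** d)"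
    using \<mu>m by (simp add: \<phi>_def diag_right diag_left right_diff_distrib sum_subtractf sum_negf mult.assoc)
  finally have "\<phi> (\<Delta> x) = \<phi> (\<Delta> (diagm \<mu>))" using d by simp
  also have "\<dots> = 0" using diag_zero[OF w z] by (simp add: \<phi>_def)
  finally show ?thesis by (simp add: \<phi>_def)
qed

lemma std_main:
  fixes \<Delta> :: "'n::finite cmat \<Rightarrow> 'n cmat"
  assumes w: "weak_2_local_derivation \<Delta>" and z: "\<forall>j. \<Delta> (E j j) = 0"
    and x: "\<forall>i. x $ i $ m = 0"
  shows "\<Delta> x $ k $ m = 0"
proof -
  have 1: "(\<Sum>j\<in>UNIV. cnj (if j = k then 2 else 1) * \<Delta> x $ j $ m) = 0"
    by (rule std_gen[OF w z x]) simp
  have 2: "(\<Sum>j\<in>UNIV. cnj 1 * \<Delta> x $ j $ m) = 0"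
    by (rule std_gen[OF w z x]) simp
  have "(\<Sum>j\<in>UNIV. cnj (if j = k then 2 else 1) * \<Delta> x $ j $ m) - (\<Sum>j\<in>UNIV. cnj 1 * \<Delta> x $ j $ m)
        = (\<Sum>j\<in>UNIV. cnj (if j = k then 2 else 1) * \<Delta> x $ j $ m - cnj 1 * \<Delta> x $ j $ m)"
    by (simp only: sum_subtractf)
  also have "\<dots> = (\<Sum>j\<in>UNIV. (if j = k then \<Delta> x $ j $ m else 0))"
    by (rule sum.cong) auto
  also have "\<dots> = \<Delta> x $ k $ m" by simp
  finally show ?thesis using 1 2 by simp
qed





definition outer :: "complex^'n \<Rightarrow> complex^'n \<Rightarrow> 'n::finite cmat" where
  "outer u w = (\<chi> r s. u$r * cnj (w$s))"
definition ip :: "complex^'n::finite \<Rightarrow> complex^'n \<Rightarrow> complex" where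
  "ip u w = (\<Sum>t\<in>UNIV. cnj (u$t) * w$t)"

lemma outer_entry[simp]: "outer u w $ r $ s = u$r * cnj (w$s)"
  by (simp add: outer_def)

lemma outer_mult: "outer a b ** outer c e = cscale (ip b c) (outer a e)"
  by (simp add: vec_eq_iff mm_entry ip_def sum_distrib_left sum_distrib_right mult_ac)

lemma cscale_cscale: "cscale a (cscale b X) = cscale (a*b) X"
  by (simp add: vec_eq_iff mult.assoc)

lemma min_rank1:
  fixes p :: "'n::finite cmat"
  assumes "minimal_projection p"
  shows "\<exists>u. ip u u = 1 \<and> p = outer u u"
proof -
  have herm: "cadj p = p" and idem: "p ** p = p" and nz: "p \<noteq> 0"
    and mini: "\<And>e. is_projection e \<Longrightarrow> e ** p = e \<Longrightarrow> e = 0 \<or> e = p"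
    using assms by (auto simp: minimal_projection_def is_projection_def)
  obtain r s where rs: "p$r$s \<noteq> 0" using nz by (metis vec_eq_iff zero_index)
  define v where "v = (\<chi> t. p$t$s)"
  have pv: "(\<Sum>t\<in>UNIV. p$i$t * v$t) = v$i" for i
  proof -
    have "(p ** p)$i$s = p$i$s" using idem by simp
    then show ?thesis by (simp add: v_def mm_entry)
  qed
  have hermE: "p$i$j = cnj (p$j$i)" for i j
  proof -
    have "cadj p $ i $ j = p $ i $ j" using herm by simp
    then show ?thesis by simp
  qed
  define Nr where "Nr = (\<Sum>t\<in>UNIV. (cmod (v$t))^2)"
  have vr: "v$r \<noteq> 0" using rs by (simp add: v_def)
  have Npos: "Nr > 0" unfolding Nr_def
    by (rule sum_pos2[of UNIV r]) (use vr in auto)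
  have cm: "cnj z * z = complex_of_real ((cmod z)^2)" for z
    by (metis complex_norm_square mult.commute)
  have ipvv: "ip v v = of_real Nr"
    unfolding ip_def Nr_def of_real_sum by (rule sum.cong) (simp_all only: cm)
  define e where "e = cscale (1 / of_real Nr) (outer v v)"
  have ovp: "outer v v ** p = outer v v"
  proof -
    have "(\<Sum>t\<in>UNIV. cnj (v$t) * p$t$j) = cnj (v$j)" for j
    proof -
      have "(\<Sum>t\<in>UNIV. cnj (v$t) * p$t$j) = cnj (\<Sum>t\<in>UNIV. p$j$t * v$t)"
        by (simp add: hermE[of _ j] mult.commute)
      then show ?thesis by (simp add: pv)
    qed
    then show ?thesis
      by (simp add: vec_eq_iff mm_entry mult.assoc sum_distrib_left[symmetric])
  qed
  have ep: "e ** p = e" by (simp add: e_def cscale_mm_left ovp)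
  have ee: "e ** e = e"
    using Npos by (simp add: e_def cscale_mm_left cscale_mm_right outer_mult ipvv cscale_cscale)
  have eh: "cadj e = e"
    by (simp add: e_def vec_eq_iff mult.commute)
  have enz: "e \<noteq> 0"
  proof
    assume "e = 0"
    then have "e $ r $ r = 0" by simp
    then show False using Npos vr by (simp add: e_def)
  qed
  have ep2: "e = p" using mini[of e] ep ee eh enz by (auto simp: is_projection_def)
  obtain c :: complex where c: "cnj c = c" "c * c = of_real Nr" "c \<noteq> 0"
  proof
    show "cnj (of_real (sqrt Nr)) = (of_real (sqrt Nr) :: complex)" by simp
    have "sqrt Nr * sqrt Nr = Nr" using Npos by simp
    then show "of_real (sqrt Nr) * of_real (sqrt Nr) = (of_real Nr :: complex)"
      by (metis of_real_mult)
    show "(of_real (sqrt Nr) :: complex) \<noteq> 0" using Npos by simp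
  qed
  define u where "u = (\<chi> t. v$t / c)"
  have dd: "x / c * (y / c) = x * y / (c * c)" for x y
    by (simp add: times_divide_times_eq)
  have "ip u u = (\<Sum>t\<in>UNIV. cnj (v$t) * v$t / (c * c))"
    unfolding ip_def u_def by (rule sum.cong) (simp_all add: c(1) dd)
  also have "\<dots> = ip v v / (c * c)" by (simp add: ip_def sum_divide_distrib)
  finally have u1: "ip u u = 1" using c ipvv Npos by simp
  have "outer u u $ i $ k = e $ i $ k" for i k
  proof -
    have "outer u u $ i $ k = v$i * cnj (v$k) / (c * c)" by (simp add: u_def c(1) dd)
    then show ?thesis by (simp add: e_def c(2))
  qed
  then have "outer u u = e" by (simp add: vec_eq_iff)
  then show ?thesis using u1 ep2 by blast
qed





lemma cadj_mm: "cadj (A ** B) = cadj B ** cadj (A::'n::finite cmat)"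
  by (simp add: vec_eq_iff mm_entry mult.commute)
lemma cadj_cadj[simp]: "cadj (cadj A) = A"
  by (simp add: vec_eq_iff)
lemma cadj_diff: "cadj (A - B) = cadj A - cadj B"
  by (simp add: vec_eq_iff)
lemma cadj_mat1[simp]: "cadj (mat 1 :: 'n::finite cmat) = mat 1"
  by (simp add: vec_eq_iff mat_def)
lemma cadj_zero[simp]: "cadj (0 :: 'n::finite cmat) = 0"
  by (simp add: vec_eq_iff)

lemma ip_nz: "ip a a = 1 \<Longrightarrow> \<exists>r. a $ r \<noteq> 0"
  by (rule ccontr) (simp add: ip_def)

lemma orth:
  assumes "ip a a = 1" "ip b b = 1" "outer a a ** outer b b = (0::'n::finite cmat)"
  shows "ip a b = 0"
proof -
  obtain r where r: "a $ r \<noteq> 0" using ip_nz[OF assms(1)] by blast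
  obtain s where s: "b $ s \<noteq> 0" using ip_nz[OF assms(2)] by blast
  have "cscale (ip a b) (outer a b) $ r $ s = 0" using assms(3) by (simp add: outer_mult)
  then show ?thesis using r s by simp
qed

lemma conj_w2l:
  fixes \<Delta> :: "'n::finite cmat \<Rightarrow> 'n cmat"
  assumes w: "weak_2_local_derivation \<Delta>"
    and U1: "\<And>A::'n cmat. A ** cadj U ** U = A" and U2: "\<And>A::'n cmat. A ** U ** cadj U = A"
  shows "weak_2_local_derivation (\<lambda>a. cadj U ** \<Delta> (U ** a ** cadj U) ** U)"
  unfolding weak_2_local_derivation_def
proof (intro allI impI)
  fix a b :: "'n cmat" and \<phi> :: "'n cmat \<Rightarrow> complex" assume \<phi>: "clinear_functional \<phi>"
  define \<phi>' where "\<phi>' y = \<phi> (cadj U ** y ** U)" for y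
  have lin': "clinear_functional \<phi>'"
    using \<phi> by (simp add: \<phi>'_def clinear_functional_def matrix_add_ldistrib madd_rdistrib
        cscale_mm_left cscale_mm_right)
  obtain D where D: "is_derivation D" "\<phi>' (\<Delta> (U ** a ** cadj U)) = \<phi>' (D (U ** a ** cadj U))"
    "\<phi>' (\<Delta> (U ** b ** cadj U)) = \<phi>' (D (U ** b ** cadj U))"
    using w lin' unfolding weak_2_local_derivation_def by blast
  define D' where "D' x = cadj U ** D (U ** x ** cadj U) ** U" for x
  have "is_derivation D'"
    unfolding is_derivation_def clinear_mat_map_def
  proof (intro conjI allI)
    fix x y :: "'n cmat"
    show "D' (x + y) = D' x + D' y"
      by (simp add: D'_def matrix_add_ldistrib madd_rdistrib deriv_add[OF D(1)])
    show "D' (x ** y) = D' x ** y + x ** D' y"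
    proof -
      have UUa: "cadj U ** U = mat 1" using U1[of "mat 1"] by simp
      have UUb: "U ** cadj U = mat 1" using U2[of "mat 1"] by simp
      have eq: "U ** (x ** y) ** cadj U = (U ** x ** cadj U) ** (U ** y ** cadj U)"
        by (simp add: matrix_mul_assoc U1)
      have "D' (x ** y) = cadj U ** D ((U ** x ** cadj U) ** (U ** y ** cadj U)) ** U"
        by (simp only: D'_def eq)
      also have "\<dots> = cadj U ** (D (U ** x ** cadj U) ** (U ** y ** cadj U)
            + (U ** x ** cadj U) ** D (U ** y ** cadj U)) ** U"
        by (rule arg_cong[where f="\<lambda>Z. cadj U ** Z ** U"], rule deriv_mult[OF D(1)])
      also have "\<dots> = D' x ** y + x ** D' y"
        by (simp add: D'_def matrix_add_ldistrib madd_rdistrib matrix_mul_assoc U1 U2 UUa)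
      finally show ?thesis .
    qed
  next
    fix c x
    show "D' (cscale c x) = cscale c (D' x)"
      by (simp add: D'_def cscale_mm_left cscale_mm_right deriv_scale[OF D(1)])
  qed
  moreover have "\<phi> (cadj U ** \<Delta> (U ** a ** cadj U) ** U) = \<phi> (D' a)"
    using D(2) by (simp add: \<phi>'_def D'_def)
  moreover have "\<phi> (cadj U ** \<Delta> (U ** b ** cadj U) ** U) = \<phi> (D' b)"
    using D(3) by (simp add: \<phi>'_def D'_def)
  ultimately show "\<exists>D. is_derivation D \<and> \<phi> (cadj U ** \<Delta> (U ** a ** cadj U) ** U) = \<phi> (D a) \<and>
      \<phi> (cadj U ** \<Delta> (U ** b ** cadj U) ** U) = \<phi> (D b)" by blast
qed





theorem lemma2p2:
  fixes \<Delta> :: "'n::finite cmat \<Rightarrow> 'n cmat"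
    and p :: "'n \<Rightarrow> 'n cmat"
    and m :: 'n
  assumes "weak_2_local_derivation \<Delta>"
    and "\<forall>a. cadj (\<Delta> (cadj a)) = \<Delta> a"
    and "\<forall>j. minimal_projection (p j)"
    and "\<forall>i j. i \<noteq> j \<longrightarrow> p i ** p j = 0"
    and "\<forall>j. \<Delta> (p j) = 0"
  shows "\<forall>a. (mat 1 - p m) ** \<Delta> ((mat 1 - p m) ** a ** (mat 1 - p m)) ** p m = 0
           \<and> p m ** \<Delta> ((mat 1 - p m) ** a ** (mat 1 - p m)) ** (mat 1 - p m) = 0"
proof -
  note w = assms(1) and sym = assms(2) and mp = assms(3) and orthp = assms(4) and z = assms(5)
  have "\<forall>j. \<exists>v. ip v v = 1 \<and> p j = outer v v" using min_rank1 mp by blast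
  then obtain u where u0: "\<forall>j. ip (u j) (u j) = 1 \<and> p j = outer (u j) (u j)"
    using choice[of "\<lambda>j v. ip v v = 1 \<and> p j = outer v v"] by blast
  have u: "ip (u j) (u j) = 1 \<and> p j = outer (u j) (u j)" for j using u0 by blast
  define U :: "'n cmat" where "U = (\<chi> r j. u j $ r)"
  have UU: "cadj U ** U = mat 1"
  proof -
    have "ip (u i) (u j) = (if i = j then 1 else 0)" for i j
    proof (cases "i = j")
      case True then show ?thesis using u by simp
    next
      case False
      then show ?thesis using orth[of "u i" "u j"] u orthp by metis
    qed
    then show ?thesis by (simp add: vec_eq_iff mm_entry mat_def U_def ip_def)
  qed
  have UU2: "U ** cadj U = mat 1" using matrix_left_right_inverse1[OF UU] .
  have U1: "A ** cadj U ** U = A" for A :: "'n cmat"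
    by (simp add: matrix_mul_assoc[symmetric] UU)
  have U2: "A ** U ** cadj U = A" for A :: "'n cmat"
    by (simp add: matrix_mul_assoc[symmetric] UU2)
  have pU: "p j = U ** E j j ** cadj U" for j
  proof -
    have "(U ** E j j ** cadj U) $ r $ s = u j $ r * cnj (u j $ s)" for r s
    proof -
      have "(U ** E j j ** cadj U) $ r $ s = (\<Sum>k\<in>UNIV. (if k = j then U$r$j else 0) * cnj (U$s$k))"
        by (simp only: mm_entry[of "U ** E j j"] E_right cadj_entry)
      also have "\<dots> = U$r$j * cnj (U$s$j)" by (simp add: if0_mult)
      finally show ?thesis by (simp add: U_def)
    qed
    then show ?thesis using u[of j] by (simp add: vec_eq_iff)
  qed
  define \<Delta>' where "\<Delta>' a = cadj U ** \<Delta> (U ** a ** cadj U) ** U" for a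
  have w': "weak_2_local_derivation \<Delta>'"
    unfolding \<Delta>'_def[abs_def] by (rule conj_w2l[OF w U1 U2])
  have z': "\<forall>j. \<Delta>' (E j j) = 0"
    using z by (simp add: \<Delta>'_def pU[symmetric])
  define q where "q = mat 1 - p m"
  have qp: "q ** p m = 0"
  proof -
    have "p m ** p m = p m" using mp by (simp add: minimal_projection_def is_projection_def)
    then show ?thesis by (simp add: q_def mdiff_rdistrib)
  qed
  have part1: "\<Delta> (q ** a ** q) ** p m = 0" for a
  proof -
    define x where "x = q ** a ** q"
    define x' where "x' = cadj U ** x ** U"
    have "x' ** E m m = cadj U ** x ** p m ** U"
      by (simp add: x'_def pU matrix_mul_assoc U1)
    also have "\<dots> = 0" by (simp add: x_def matrix_mul_assoc[symmetric] qp)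
    finally have "x' ** E m m = 0" .
    then have col: "\<forall>i. x' $ i $ m = 0"
      by (metis E_right vec_eq_iff zero_index)
    have "\<Delta>' x' $ k $ m = 0" for k by (rule std_main[OF w' z' col])
    moreover have "\<Delta>' x' = cadj U ** \<Delta> x ** U"
      by (simp add: \<Delta>'_def x'_def matrix_mul_assoc U2) (simp add: matrix_mul_assoc[symmetric] UU2)
    ultimately have h: "cadj U ** \<Delta> x ** U ** E m m = 0"
      by (simp add: vec_eq_iff E_right)
    have "\<Delta> x ** p m = U ** (cadj U ** \<Delta> x ** U ** E m m) ** cadj U"
      by (simp add: pU matrix_mul_assoc) (simp add: matrix_mul_assoc[symmetric] UU2)
    then show ?thesis using h by (simp add: x_def)
  qed
  have qh: "cadj q = q"
    using mp by (simp add: q_def cadj_diff minimal_projection_def is_projection_def)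
  have ph: "cadj (p m) = p m"
    using mp by (simp add: minimal_projection_def is_projection_def)
  have part2: "p m ** \<Delta> (q ** a ** q) = 0" for a
  proof -
    have c: "cadj (q ** a ** q) = q ** cadj a ** q" by (simp add: cadj_mm qh matrix_mul_assoc)
    have c2: "cadj (q ** cadj a ** q) = q ** a ** q" by (simp add: cadj_mm qh matrix_mul_assoc)
    have h1: "cadj (\<Delta> (q ** a ** q)) = \<Delta> (q ** cadj a ** q)"
      using sym[rule_format, of "q ** cadj a ** q"] c2 by (simp only:)
    have "cadj (p m ** \<Delta> (q ** a ** q)) = cadj (\<Delta> (q ** a ** q)) ** cadj (p m)"
      by (rule cadj_mm)
    then have "cadj (p m ** \<Delta> (q ** a ** q)) = \<Delta> (q ** cadj a ** q) ** p m"
      by (simp only: h1 ph)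
    then have "cadj (p m ** \<Delta> (q ** a ** q)) = 0" using part1 by simp
    then show ?thesis by (metis cadj_cadj cadj_zero)
  qed
  show ?thesis
  proof
    fix a
    show "(mat 1 - p m) ** \<Delta> ((mat 1 - p m) ** a ** (mat 1 - p m)) ** p m = 0
           \<and> p m ** \<Delta> ((mat 1 - p m) ** a ** (mat 1 - p m)) ** (mat 1 - p m) = 0"
      using part1[of a] part2[of a] unfolding q_def[symmetric]
      by (simp add: matrix_mul_assoc[symmetric])
  qed
qed



end
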